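(* Let $r\ge2$ be an integer and $\psi\in C_p(\mathbb{R})$. Then for every $n\in\mathbb{N}_0$, $k\in\{0,1,\dots,r^n-1\}$ and $y\in(0,1)$, $$\Delta_{n,k}(y;U_\psi)=\sum_{j=0}^{n-1} r^j\,\Delta_{n-j,k}(y;\psi)-\frac{2r^n}{y(1-y)}\,U_\psi(y),$$ where for $n=0$ the sum is interpreted as $0$.
   Context: $C_p(\mathbb{R})$ denotes the set of all continuous functions $f:\mathbb{R}\to\mathbb{R}$ periodic with period $1$ with $f(0)=0$; $\mathbb{N}_0=\mathbb{N}\cup\{0\}$. For $\psi\in C_p(\mathbb{R})$, $U_\psi(x)=\sum_{j=0}^\infty r^{-j}\psi(r^jx)$, $x\in\mathbb{R}$ (then $U_\psi\in C_p(\mathbb{R})$). For $f\in C_p(\mathbb{R})$ and $(n,k,y)\in\mathbb{N}_0\times\mathbb{Z}\times(0,1)$: $\delta^+_{n,k}(y;f)=\dfrac{f(\frac{k+1}{r^n})-f(\frac{k+y}{r^n})}{\frac{1-y}{r^n}}$, $\delta^-_{n,k}(y;f)=\dfrac{f(\frac{k+y}{r^n})-f(\frac{k}{r^n})}{\frac{y}{r^n}}$, $\Delta_{n,k}(y;f)=2r^n\big(\delta^+_{n,k}(y;f)-\delta^-_{n,k}(y;f)\big)$. *)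

theory Defs
  imports "HOL-Analysis.Analysis"
begin

definition Cp :: "(real \<Rightarrow> real) set" where
  "Cp = {f. continuous_on UNIV f \<and> (\<forall>x. f (x + 1) = f x) \<and> f 0 = 0}"

definition U :: "nat \<Rightarrow> (real \<Rightarrow> real) \<Rightarrow> real \<Rightarrow> real" where
  "U r \<psi> x = (\<Sum>j. \<psi> (real r ^ j * x) / real r ^ j)"

definition delta_plus :: "nat \<Rightarrow> nat \<Rightarrow> int \<Rightarrow> real \<Rightarrow> (real \<Rightarrow> real) \<Rightarrow> real" where
  "delta_plus r n k y f =
     (f ((real_of_int k + 1) / real r ^ n) - f ((real_of_int k + y) / real r ^ n)) / ((1 - y) / real r ^ n)"

definition delta_minus :: "nat \<Rightarrow> nat \<Rightarrow> int \<Rightarrow> real \<Rightarrow> (real \<Rightarrow> real) \<Rightarrow> real" where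
  "delta_minus r n k y f =
     (f ((real_of_int k + y) / real r ^ n) - f (real_of_int k / real r ^ n)) / (y / real r ^ n)"

definition Delta :: "nat \<Rightarrow> nat \<Rightarrow> int \<Rightarrow> real \<Rightarrow> (real \<Rightarrow> real) \<Rightarrow> real" where
  "Delta r n k y f = 2 * real r ^ n * (delta_plus r n k y f - delta_minus r n k y f)"

end

theory Submission
  imports Defs
begin

lemma cp_nat: assumes "\<psi> \<in> Cp" shows "\<psi> (x + real m) = \<psi> x"
proof (induction m)
  case 0 then show ?case by simp
next
  case (Suc m)
  have "\<psi> (x + real (Suc m)) = \<psi> ((x + real m) + 1)" by (simp add: algebra_simps)
  also have "\<dots> = \<psi> (x + real m)" using assms by (simp add: Cp_def)
  finally show ?case using Suc by simp
qed

lemma cp_int: assumes "\<psi> \<in> Cp" shows "\<psi> (x + real_of_int m) = \<psi> x"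
proof (cases "m \<ge> 0")
  case True
  then have e: "real_of_int m = real (nat m)" by simp
  show ?thesis unfolding e by (rule cp_nat[OF assms])
next
  case False
  then have e: "real_of_int m = - real (nat (-m))" by simp
  have "\<psi> x = \<psi> ((x - real (nat (-m))) + real (nat (-m)))" by simp
  also have "\<dots> = \<psi> (x - real (nat (-m)))" by (rule cp_nat[OF assms])
  finally show ?thesis unfolding e by simp
qed

lemma cp_bounded: assumes "\<psi> \<in> Cp" shows "\<exists>B. \<forall>x. \<bar>\<psi> x\<bar> \<le> B"
proof -
  have c: "continuous_on {0..1} \<psi>" using assms unfolding Cp_def
    using continuous_on_subset by blast
  have "compact (\<psi> ` {0..1})" using compact_continuous_image[OF c] by simp
  then have "bounded (\<psi> ` {0..1})" by (rule compact_imp_bounded)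
  then obtain B where B: "\<forall>z\<in>\<psi> ` {0..1}. norm z \<le> B"
    unfolding bounded_iff by blast
  have "\<bar>\<psi> x\<bar> \<le> B" for x
  proof -
    have "\<psi> x = \<psi> (frac x + real_of_int \<lfloor>x\<rfloor>)" by (simp add: frac_def)
    also have "\<dots> = \<psi> (frac x)" using cp_int[OF assms] by blast
    finally have "\<psi> x = \<psi> (frac x)" .
    moreover have "frac x \<in> {0..1}" using frac_lt_1[of x] frac_ge_0[of x] by simp
    ultimately show ?thesis using B by auto
  qed
  then show ?thesis by blast
qed

lemma cp_summable: assumes "\<psi> \<in> Cp" "r \<ge> 2"
  shows "summable (\<lambda>j. \<psi> (real r ^ j * x) / real r ^ j)"
proof -
  obtain B where B: "\<forall>x. \<bar>\<psi> x\<bar> \<le> B" using cp_bounded[OF assms(1)] by blast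
  have g: "summable (\<lambda>j. B * (1 / real r) ^ j)"
    using assms(2) by (intro summable_mult summable_geometric) auto
  show ?thesis
  proof (rule summable_comparison_test'[OF g])
    fix j :: nat
    have pos: "real r ^ j > 0" using assms(2) by simp
    have "norm (\<psi> (real r ^ j * x) / real r ^ j) = \<bar>\<psi> (real r ^ j * x)\<bar> / real r ^ j"
      using pos by (simp add: abs_div)
    also have "\<dots> \<le> B / real r ^ j" using B pos by (simp add: divide_right_mono)
    also have "\<dots> = B * (1 / real r) ^ j" by (simp add: power_one_over)
    finally show "norm (\<psi> (real r ^ j * x) / real r ^ j) \<le> B * (1 / real r) ^ j" .
  qed
qed

lemma U_split:
  assumes "\<psi> \<in> Cp" "r \<ge> 2"
  shows "U r \<psi> ((real_of_int k + t) / real r ^ n) =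
    (\<Sum>j<n. \<psi> ((real_of_int k + t) / real r ^ (n - j)) / real r ^ j) + U r \<psi> t / real r ^ n"
proof -
  let ?x = "(real_of_int k + t) / real r ^ n"
  define f where "f = (\<lambda>j. \<psi> (real r ^ j * ?x) / real r ^ j)"
  have s: "summable f" unfolding f_def by (rule cp_summable[OF assms])
  have rp: "real r > 0" using assms by simp
  have "U r \<psi> ?x = (\<Sum>j. f (j + n)) + sum f {..<n}"
    unfolding U_def f_def[symmetric] by (rule suminf_split_initial_segment[OF s])
  moreover have "sum f {..<n} = (\<Sum>j<n. \<psi> ((real_of_int k + t) / real r ^ (n - j)) / real r ^ j)"
  proof (rule sum.cong)
    fix j assume "j \<in> {..<n}"
    then have "real r ^ n = real r ^ j * real r ^ (n - j)"
      by (simp add: power_add[symmetric])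
    then have "real r ^ j * ?x = (real_of_int k + t) / real r ^ (n - j)" using rp by simp
    then show "f j = \<psi> ((real_of_int k + t) / real r ^ (n - j)) / real r ^ j" unfolding f_def by simp
  qed simp
  moreover have "(\<lambda>j. f (j + n)) = (\<lambda>j. (\<psi> (real r ^ j * t) / real r ^ j) / real r ^ n)"
  proof
    fix j
    have h: "real r ^ (j + n) * ?x = real r ^ j * t + real_of_int (k * int r ^ j)"
      using rp by (simp add: power_add field_simps)
    have "\<psi> (real r ^ (j + n) * ?x) = \<psi> (real r ^ j * t)" unfolding h by (rule cp_int[OF assms(1)])
    then show "f (j + n) = (\<psi> (real r ^ j * t) / real r ^ j) / real r ^ n"
      unfolding f_def by (simp add: power_add)
  qed
  moreover have "(\<Sum>j. (\<psi> (real r ^ j * t) / real r ^ j) / real r ^ n) = U r \<psi> t / real r ^ n"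
    unfolding U_def by (rule suminf_divide[OF cp_summable[OF assms]])
  ultimately show ?thesis by simp
qed

lemma U_zero: assumes "\<psi> \<in> Cp" shows "U r \<psi> 0 = 0"
  using assms unfolding U_def Cp_def by simp

lemma U_one: assumes "\<psi> \<in> Cp" shows "U r \<psi> 1 = 0"
proof -
  have "\<psi> (real r ^ j) = 0" for j
    using cp_nat[OF assms, of 0 "r ^ j"] assms unfolding Cp_def by simp
  then show ?thesis unfolding U_def by simp
qed

theorem theorem3p1:
  fixes r n :: nat and k :: int and y :: real and \<psi> :: "real \<Rightarrow> real"
  assumes "r \<ge> 2" and "\<psi> \<in> Cp"
    and "0 \<le> k" and "k < int r ^ n"
    and "0 < y" and "y < 1"
  shows "Delta r n k y (U r \<psi>) =
           (\<Sum>j<n. real r ^ j * Delta r (n - j) k y \<psi>)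
           - 2 * real r ^ n / (y * (1 - y)) * U r \<psi> y"
proof -
  have rp: "real r > 0" using assms by simp
  have y0: "y \<noteq> 0" and y1: "1 - y \<noteq> 0" using assms(5,6) by auto
  define R where "R = real r ^ n"
  have Rp: "R > 0" using rp R_def by simp
  define P where "P = (\<lambda>t j. \<psi> ((real_of_int k + t) / real r ^ (n - j)))"
  define A where "A = (\<lambda>t. \<Sum>j<n. P t j / real r ^ j)"
  have u1: "U r \<psi> ((real_of_int k + 1) / R) = A 1"
    using U_split[OF assms(2,1), of k 1 n] U_one[OF assms(2)] unfolding A_def P_def R_def by simp
  have uy: "U r \<psi> ((real_of_int k + y) / R) = A y + U r \<psi> y / R"
    using U_split[OF assms(2,1), of k y n] unfolding A_def P_def R_def by simp
  have u0: "U r \<psi> (real_of_int k / R) = A 0"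
    using U_split[OF assms(2,1), of k 0 n] U_zero[OF assms(2)] unfolding A_def P_def R_def by simp
  have trm: "real r ^ j * Delta r (n - j) k y \<psi> =
      2 * R * (R / (1 - y) * ((P 1 j - P y j) / real r ^ j) - R / y * ((P y j - P 0 j) / real r ^ j))"
    if "j < n" for j
  proof -
    have e: "R = real r ^ j * real r ^ (n - j)" unfolding R_def using that
      by (simp add: power_add[symmetric])
    have rj: "real r ^ j > 0" "real r ^ (n - j) > 0" using rp by auto
    show ?thesis unfolding Delta_def delta_plus_def delta_minus_def P_def e
      using rj y0 y1 by (simp add: field_simps)
  qed
  have "(\<Sum>j<n. real r ^ j * Delta r (n - j) k y \<psi>) =
      (\<Sum>j<n. 2 * R * (R / (1 - y) * ((P 1 j - P y j) / real r ^ j) - R / y * ((P y j - P 0 j) / real r ^ j)))"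
    using trm by simp
  also have "\<dots> = (\<Sum>j<n. (2*R*R/(1-y)) * (P 1 j / real r ^ j) - (2*R*R/(1-y) + 2*R*R/y) * (P y j / real r ^ j)
       + (2*R*R/y) * (P 0 j / real r ^ j))"
    by (rule sum.cong) (simp_all add: algebra_simps diff_divide_distrib add_divide_distrib)
  also have "\<dots> = (2*R*R/(1-y)) * A 1 - (2*R*R/(1-y) + 2*R*R/y) * A y + (2*R*R/y) * A 0"
    unfolding A_def by (simp add: sum.distrib sum_subtractf sum_distrib_left)
  also have "\<dots> = 2 * R * (R / (1 - y) * (A 1 - A y) - R / y * (A y - A 0))"
  proof -
    have e1: "2*R*R/(1-y) = 2*R*(R/(1-y))" "2*R*R/y = 2*R*(R/y)" by simp_all
    show ?thesis unfolding e1 by (simp add: algebra_simps del: times_divide_eq_right)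
  qed
  finally have S: "(\<Sum>j<n. real r ^ j * Delta r (n - j) k y \<psi>) =
      2 * R * (R / (1 - y) * (A 1 - A y) - R / y * (A y - A 0))" .
  have L: "Delta r n k y (U r \<psi>) = 2 * R * (R / (1 - y) * (A 1 - (A y + U r \<psi> y / R))
       - R / y * ((A y + U r \<psi> y / R) - A 0))"
    unfolding Delta_def delta_plus_def delta_minus_def R_def[symmetric] u1 uy u0
    using y0 y1 Rp by (simp add: field_simps)
  define u where "u = U r \<psi> y"
  have g: "\<And>a b c d e f g. 2 * R * (a * (c - (d + f)) - b * ((d + f) - e))
      = 2 * R * (a * (c - d) - b * (d - e)) - 2 * R * (a * f + b * f)"
    by (simp add: algebra_simps)
  have k1: "R / (1 - y) * (u / R) + R / y * (u / R) = u / (y * (1 - y))"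
  proof -
    have "R / (1 - y) * (u / R) = u / (1 - y)" "R / y * (u / R) = u / y" using Rp by auto
    moreover have "u / (1 - y) + u / y = (u * y + u * (1 - y)) / ((1 - y) * y)"
      using add_frac_eq[OF y1 y0] .
    moreover have "u * y + u * (1 - y) = u" by (simp add: algebra_simps)
    moreover have "(1 - y) * y = y * (1 - y)" by (rule mult.commute)
    ultimately show ?thesis by (simp only:)
  qed
  have "Delta r n k y (U r \<psi>) = 2 * R * (R / (1 - y) * (A 1 - A y) - R / y * (A y - A 0))
      - 2 * R * (R / (1 - y) * (u / R) + R / y * (u / R))"
    unfolding L u_def[symmetric] by (rule g)
  also have "\<dots> = 2 * R * (R / (1 - y) * (A 1 - A y) - R / y * (A y - A 0))
      - 2 * R / (y * (1 - y)) * u"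
    unfolding k1 by simp
  also have "\<dots> = (\<Sum>j<n. real r ^ j * Delta r (n - j) k y \<psi>)
           - 2 * real r ^ n / (y * (1 - y)) * U r \<psi> y"
    by (simp only: S R_def u_def)
  finally show ?thesis .
qed

end
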